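(* Let $L>0$, $d\ge1$, and let $X=\{x^{(1)},\dots,x^{(n)}\}\subset\mathbb{R}^d$ with $\|x^{(i)}\|_\infty\le L$ for all $i$. Let $w\in\mathbb{R}^n$ with $\left(\sum_{i=1}^n|w_i|\right)^2\le\xi$, and let $\alpha>0$. Then for every positive integer $s$, \[ w^T\left(K_X-K^{\mathsf{GS}}_{X,s}\right)w\le\left(\sum_{i=1}^n|w_i|\right)^2 d\,\exp(2dL^2)\left(\frac{2eL^2}{s}\right)^s, \] and moreover this quantity is at most $\alpha$ when $s=\Theta\!\left(\frac{\log\frac{\xi\, d\exp(2dL^2)}{\alpha}}{\log\left(\frac{1}{2eL^2}\log\frac{\xi\, d\exp(2dL^2)}{\alpha}\right)}\right)$ (with a sufficiently large constant).
   Context: $K_X$ is the $n\times n$ matrix with $(K_X)_{i,j}=\exp(-\|x^{(i)}-x^{(j)}\|^2)$ (Euclidean norm). For a positive integer $s$, $K^{\mathsf{GS}}_{X,s}$ is the $n\times n$ matrix with \[ (K^{\mathsf{GS}}_{X,s})_{i,j}=\sum_{j_1=0}^{s-1}\cdots\sum_{j_d=0}^{s-1}\left(e^{-\|x^{(i)}\|^2}\prod_{a=1}^{d}\sqrt{\tfrac{2^{j_a}}{j_a!}}(x^{(i)}_a)^{j_a}\right)\left(e^{-\|x^{(j)}\|^2}\prod_{a=1}^{d}\sqrt{\tfrac{2^{j_a}}{j_a!}}(x^{(j)}_a)^{j_a}\right). \] *)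

theory Defs
  imports Complex_Main "HOL-Library.FuncSet"
begin

text \<open>Points x^(1..n) in R^d are represented as x :: nat => nat => real,
  point i (i < n), coordinate a (a < d), both 0-based.\<close>

definition gauss_kernel :: "nat \<Rightarrow> (nat \<Rightarrow> nat \<Rightarrow> real) \<Rightarrow> nat \<Rightarrow> nat \<Rightarrow> real" where
  "gauss_kernel d x i j = exp (- (\<Sum>a<d. (x i a - x j a)^2))"

definition gs_feature :: "nat \<Rightarrow> (nat \<Rightarrow> nat \<Rightarrow> real) \<Rightarrow> nat \<Rightarrow> (nat \<Rightarrow> nat) \<Rightarrow> real" where
  "gs_feature d x i J =
     exp (- (\<Sum>a<d. (x i a)^2)) * (\<Prod>a<d. sqrt (2 ^ J a / fact (J a)) * (x i a) ^ J a)"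

definition gs_kernel :: "nat \<Rightarrow> nat \<Rightarrow> (nat \<Rightarrow> nat \<Rightarrow> real) \<Rightarrow> nat \<Rightarrow> nat \<Rightarrow> real" where
  "gs_kernel d s x i j =
     (\<Sum>J\<in>PiE {..<d} (\<lambda>_. {..<s}). gs_feature d x i J * gs_feature d x j J)"

definition quad_form :: "nat \<Rightarrow> (nat \<Rightarrow> real) \<Rightarrow> (nat \<Rightarrow> nat \<Rightarrow> real) \<Rightarrow> real" where
  "quad_form n w M = (\<Sum>i<n. \<Sum>j<n. w i * M i j * w j)"

end

theory Submission
  imports Defs
begin

lemma prod_diff_bound:
  fixes E T :: "nat \<Rightarrow> real"
  assumes M: "M \<ge> 0" and hE: "\<forall>a<d. \<bar>E a\<bar> \<le> M" and hT: "\<forall>a<d. \<bar>T a\<bar> \<le> M"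
    and hD: "\<forall>a<d. \<bar>E a - T a\<bar> \<le> \<delta>"
  shows "\<bar>(\<Prod>a<d. E a) - (\<Prod>a<d. T a)\<bar> \<le> real d * M^(d-1) * \<delta>"
  using hE hT hD
proof (induction d)
  case 0
  then show ?case by simp
next
  case (Suc k)
  have IH: "\<bar>(\<Prod>a<k. E a) - (\<Prod>a<k. T a)\<bar> \<le> real k * M^(k-1) * \<delta>"
    using Suc by auto
  have d0: "\<delta> \<ge> 0" using Suc.prems(3) by (meson abs_ge_zero less_Suc_eq order_trans)
  have Ek: "\<bar>E k\<bar> \<le> M" "\<bar>E k - T k\<bar> \<le> \<delta>" using Suc.prems by auto
  have PT: "\<bar>\<Prod>a<k. T a\<bar> \<le> M^k"
  proof -
    have "\<bar>\<Prod>a<k. T a\<bar> = (\<Prod>a<k. \<bar>T a\<bar>)" by (simp add: abs_prod)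
    also have "\<dots> \<le> (\<Prod>a<k. M)" by (rule prod_mono) (use Suc.prems(2) in auto)
    finally show ?thesis by simp
  qed
  have eq: "(\<Prod>a<Suc k. E a) - (\<Prod>a<Suc k. T a)
      = ((\<Prod>a<k. E a) - (\<Prod>a<k. T a)) * E k + (\<Prod>a<k. T a) * (E k - T k)"
    by (simp add: algebra_simps)
  have "\<bar>((\<Prod>a<k. E a) - (\<Prod>a<k. T a)) * E k + (\<Prod>a<k. T a) * (E k - T k)\<bar>
      \<le> \<bar>(\<Prod>a<k. E a) - (\<Prod>a<k. T a)\<bar> * \<bar>E k\<bar> + \<bar>\<Prod>a<k. T a\<bar> * \<bar>E k - T k\<bar>"
    by (metis abs_mult abs_triangle_ineq)
  also have "\<dots> \<le> (real k * M^(k-1) * \<delta>) * M + M^k * \<delta>"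
    by (intro add_mono mult_mono IH Ek PT) (use M d0 in auto)
  also have "\<dots> = real (Suc k) * M^(Suc k - 1) * \<delta>"
  proof (cases k)
    case 0 then show ?thesis by simp
  next
    case (Suc m) then show ?thesis by (simp add: algebra_simps)
  qed
  finally show ?case using eq by simp
qed

lemma exp_tail:
  fixes p :: real
  shows "\<bar>exp p - (\<Sum>m<s. p^m / fact m)\<bar> \<le> exp \<bar>p\<bar> * \<bar>p\<bar>^s / fact s"
proof -
  obtain t where t: "\<bar>t\<bar> \<le> \<bar>p\<bar>" "exp p = (\<Sum>m<s. p^m / fact m) + exp t / fact s * p^s"
    using Maclaurin_exp_le by blast
  have "\<bar>exp p - (\<Sum>m<s. p^m / fact m)\<bar> = exp t * \<bar>p\<bar>^s / fact s"
    using t by (simp add: abs_mult power_abs)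
  also have "\<dots> \<le> exp \<bar>p\<bar> * \<bar>p\<bar>^s / fact s"
    using t by (intro divide_right_mono mult_right_mono) auto
  finally show ?thesis .
qed

lemma exp_trunc:
  fixes p :: real
  shows "\<bar>\<Sum>m<s. p^m / fact m\<bar> \<le> exp \<bar>p\<bar>"
proof -
  obtain t where t: "exp \<bar>p\<bar> = (\<Sum>m<s. \<bar>p\<bar>^m / fact m) + exp t / fact s * \<bar>p\<bar>^s"
    using Maclaurin_exp_le by blast
  have "\<bar>\<Sum>m<s. p^m / fact m\<bar> \<le> (\<Sum>m<s. \<bar>p^m / fact m\<bar>)" by (rule sum_abs)
  also have "\<dots> = (\<Sum>m<s. \<bar>p\<bar>^m / fact m)" by (simp add: power_abs)
  also have "\<dots> \<le> exp \<bar>p\<bar>" using t by simp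
  finally show ?thesis .
qed

lemma fact_bound:
  "real s ^ s / fact s \<le> exp (real s)"
proof -
  obtain t where t: "exp (real s) = (\<Sum>m<Suc s. real s^m / fact m) + exp t / fact (Suc s) * real s^Suc s"
    using Maclaurin_exp_le by blast
  have "real s ^ s / fact s \<le> (\<Sum>m<Suc s. real s^m / fact m)"
    by (rule member_le_sum[where f="\<lambda>m. real s^m / fact m"]) auto
  also have "\<dots> \<le> exp (real s)" using t by simp
  finally show ?thesis .
qed

lemma pow_fact_bound:
  fixes c :: real
  assumes "c \<ge> 0" "s \<ge> 1"
  shows "c^s / fact s \<le> (exp 1 * c / s)^s"
proof -
  have sp: "real s > 0" using assms by simp
  have "c^s / fact s = (c^s / real s ^ s) * (real s ^ s / fact s)"
    using sp by simp
  also have "\<dots> \<le> (c^s / real s ^ s) * exp (real s)"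
    by (intro mult_left_mono fact_bound) (use assms in simp)
  also have "exp (real s) = exp 1 ^ s"
    by (metis exp_of_nat_mult mult.right_neutral)
  also have "(c^s / real s ^ s) * exp 1 ^ s = (exp 1 * c / s)^s"
    by (simp add: power_divide power_mult_distrib)
  finally show ?thesis .
qed

lemma gauss_factor:
  "gauss_kernel d x i j = exp (- (\<Sum>a<d. (x i a)^2)) * exp (- (\<Sum>a<d. (x j a)^2))
     * (\<Prod>a<d. exp (2 * x i a * x j a))"
proof -
  have "- (\<Sum>a<d. (x i a - x j a)^2) = - (\<Sum>a<d. (x i a)^2) + - (\<Sum>a<d. (x j a)^2) + (\<Sum>a<d. 2 * x i a * x j a)"
    by (simp add: power2_diff sum.distrib sum_subtractf algebra_simps)
  then show ?thesis unfolding gauss_kernel_def by (simp only: exp_add exp_sum[OF finite_lessThan])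
qed

lemma gs_factor:
  "gs_kernel d s x i j = exp (- (\<Sum>a<d. (x i a)^2)) * exp (- (\<Sum>a<d. (x j a)^2))
     * (\<Prod>a<d. \<Sum>k<s. (2 * x i a * x j a)^k / fact k)"
proof -
  have f: "gs_feature d x i J * gs_feature d x j J = exp (- (\<Sum>a<d. (x i a)^2)) * exp (- (\<Sum>a<d. (x j a)^2))
     * (\<Prod>a<d. (2 * x i a * x j a)^(J a) / fact (J a))" for J
  proof -
    have "(\<Prod>a<d. sqrt (2 ^ J a / fact (J a)) * (x i a) ^ J a) * (\<Prod>a<d. sqrt (2 ^ J a / fact (J a)) * (x j a) ^ J a)
        = (\<Prod>a<d. (sqrt (2 ^ J a / fact (J a)) * (x i a) ^ J a) * (sqrt (2 ^ J a / fact (J a)) * (x j a) ^ J a))"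
      by (simp add: prod.distrib)
    also have "\<dots> = (\<Prod>a<d. (2 * x i a * x j a)^(J a) / fact (J a))"
    proof (rule prod.cong[OF refl])
      fix a
      have "sqrt (2 ^ J a / fact (J a)) * sqrt (2 ^ J a / fact (J a)) = 2 ^ J a / fact (J a)"
        by (simp del: real_sqrt_mult_self add: real_sqrt_mult_self)
      then show "(sqrt (2 ^ J a / fact (J a)) * (x i a) ^ J a) * (sqrt (2 ^ J a / fact (J a)) * (x j a) ^ J a)
        = (2 * x i a * x j a)^(J a) / fact (J a)"
        by (simp add: power_mult_distrib algebra_simps)
    qed
    finally show ?thesis unfolding gs_feature_def by (simp add: algebra_simps)
  qed
  show ?thesis
    unfolding gs_kernel_def f
    by (simp add: sum_distrib_left[symmetric] prod_sum_PiE)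
qed

lemma entry_bound:
  fixes L :: real
  assumes L: "L > 0" and d: "d \<ge> 1" and xi: "\<forall>a<d. \<bar>x i a\<bar> \<le> L" and xj: "\<forall>a<d. \<bar>x j a\<bar> \<le> L"
    and s: "s \<ge> 1"
  shows "\<bar>gauss_kernel d x i j - gs_kernel d s x i j\<bar> \<le> real d * exp (2 * real d * L^2) * (2 * exp 1 * L^2 / s) ^ s"
proof -
  define c where "c = 2 * L^2"
  have c0: "c \<ge> 0" unfolding c_def by simp
  define p where "p a = 2 * x i a * x j a" for a
  have pc: "\<bar>p a\<bar> \<le> c" if "a < d" for a
  proof -
    have "\<bar>x i a\<bar> * \<bar>x j a\<bar> \<le> L * L"
      using xi xj that by (intro mult_mono) auto
    then show ?thesis unfolding p_def c_def by (simp add: abs_mult power2_eq_square)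
  qed
  define ei where "ei = exp (- (\<Sum>a<d. (x i a)^2))"
  define ej where "ej = exp (- (\<Sum>a<d. (x j a)^2))"
  have ei: "\<bar>ei * ej\<bar> \<le> 1"
  proof -
    have "ei \<le> 1" "ej \<le> 1" unfolding ei_def ej_def by (simp_all add: sum_nonneg)
    moreover have "ei > 0" "ej > 0" unfolding ei_def ej_def by auto
    ultimately show ?thesis by (simp add: abs_mult mult_le_one)
  qed
  have eq: "gauss_kernel d x i j - gs_kernel d s x i j
     = (ei * ej) * ((\<Prod>a<d. exp (p a)) - (\<Prod>a<d. \<Sum>k<s. (p a)^k / fact k))"
    unfolding gauss_factor gs_factor ei_def ej_def p_def by (simp add: algebra_simps)
  have pb: "\<bar>(\<Prod>a<d. exp (p a)) - (\<Prod>a<d. \<Sum>k<s. (p a)^k / fact k)\<bar>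
      \<le> real d * (exp c)^(d-1) * (exp c * c^s / fact s)"
  proof (rule prod_diff_bound)
    show "\<forall>a<d. \<bar>exp (p a)\<bar> \<le> exp c" using pc by (auto simp: abs_le_iff)
    show "\<forall>a<d. \<bar>\<Sum>k<s. p a ^ k / fact k\<bar> \<le> exp c"
      using pc exp_trunc by (meson exp_le_cancel_iff order_trans)
    show "\<forall>a<d. \<bar>exp (p a) - (\<Sum>k<s. p a ^ k / fact k)\<bar> \<le> exp c * c ^ s / fact s"
    proof (intro allI impI)
      fix a assume a: "a < d"
      have "exp \<bar>p a\<bar> * \<bar>p a\<bar>^s / fact s \<le> exp c * c ^ s / fact s"
        using pc[OF a] by (intro divide_right_mono mult_mono power_mono) auto
      then show "\<bar>exp (p a) - (\<Sum>k<s. p a ^ k / fact k)\<bar> \<le> exp c * c ^ s / fact s"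
        using exp_tail[of "p a" s] by linarith
    qed
  qed simp
  have "(exp c)^(d-1) * exp c = exp (2 * d * L^2)"
  proof -
    have "(exp c)^(d-1) * exp c = (exp c)^d" using d
      by (metis Suc_diff_1 less_le_trans power_Suc2 zero_less_one)
    also have "\<dots> = exp (real d * c)" by (simp add: exp_of_nat_mult)
    finally show ?thesis unfolding c_def by simp
  qed
  then have pb2: "real d * (exp c)^(d-1) * (exp c * c^s / fact s) = real d * exp (2 * d * L^2) * (c^s / fact s)"
    by (metis (no_types, lifting) ab_semigroup_mult_class.mult_ac(1) times_divide_eq_right)
  have cs: "c^s / fact s \<le> (2 * exp 1 * L^2 / s) ^ s"
  proof -
    have e: "exp 1 * c = 2 * exp 1 * L^2" unfolding c_def by simp
    show ?thesis using pow_fact_bound[OF c0 s] by (simp only: e)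
  qed
  have "\<bar>gauss_kernel d x i j - gs_kernel d s x i j\<bar>
     = \<bar>ei * ej\<bar> * \<bar>(\<Prod>a<d. exp (p a)) - (\<Prod>a<d. \<Sum>k<s. (p a)^k / fact k)\<bar>"
    unfolding eq abs_mult ..
  also have "\<dots> \<le> 1 * (real d * exp (2 * d * L^2) * (c^s / fact s))"
  proof -
    have pb3: "\<bar>(\<Prod>a<d. exp (p a)) - (\<Prod>a<d. \<Sum>k<s. (p a)^k / fact k)\<bar> \<le> real d * exp (2 * d * L^2) * (c^s / fact s)"
      using pb unfolding pb2 .
    show ?thesis using pb3 ei by (intro mult_mono) auto
  qed
  also have "\<dots> \<le> real d * exp (2 * d * L^2) * (2 * exp 1 * L^2 / s) ^ s"
    using cs by (simp only: mult_1_left, intro mult_left_mono) auto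
  finally show ?thesis by simp
qed

lemma quad_bound:
  assumes "\<forall>i<n. \<forall>j<n. \<bar>D i j\<bar> \<le> B"
  shows "quad_form n w D \<le> (\<Sum>i<n. \<bar>w i\<bar>)^2 * B"
proof -
  have "quad_form n w D \<le> (\<Sum>i<n. \<Sum>j<n. \<bar>w i\<bar> * B * \<bar>w j\<bar>)"
    unfolding quad_form_def
  proof (intro sum_mono)
    fix i j assume "i \<in> {..<n}" "j \<in> {..<n}"
    then have "\<bar>D i j\<bar> \<le> B" using assms by auto
    then have "\<bar>w i * D i j * w j\<bar> \<le> \<bar>w i\<bar> * B * \<bar>w j\<bar>"
      by (simp add: abs_mult mult_mono mult_right_mono mult_left_mono)
    then show "w i * D i j * w j \<le> \<bar>w i\<bar> * B * \<bar>w j\<bar>" by linarith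
  qed
  also have "\<dots> = (\<Sum>i<n. \<bar>w i\<bar>)^2 * B"
    by (simp add: power2_eq_square sum_distrib_left sum_distrib_right algebra_simps)
  finally show ?thesis .
qed

lemma part2:
  fixes c A B S2 \<xi> \<alpha> :: real and s :: nat
  assumes c: "c > 0" and A: "A = \<xi> * B / \<alpha>" and B: "B > 0" and al: "\<alpha> > 0"
    and S: "S2 \<le> \<xi>" "S2 \<ge> 0" and u1: "ln A / c > 1" and s1: "s \<ge> 1"
    and sC: "real s \<ge> 2 * (ln A / ln (ln A / c))"
  shows "S2 * B * (c / s)^s \<le> \<alpha>"
proof -
  define l where "l = ln A"
  define u where "u = l / c"
  have u: "u > 1" using u1 unfolding u_def l_def .
  have lu: "ln u > 0" using u by simp
  have l_eq: "l = c * u" unfolding u_def using c by simp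
  have A0: "A > 0"
  proof (rule ccontr)
    assume "\<not> A > 0"
    moreover have "A \<ge> 0" unfolding A using S B al by simp
    ultimately have "ln A = 0" by simp
    then show False using u1 by simp
  qed
  define t0 where "t0 = 2 * u / ln u"
  define t where "t = real s / c"
  have sge: "real s \<ge> c * t0"
    using sC unfolding t0_def l_def[symmetric] u_def[symmetric] l_eq using c by (simp add: field_simps)
  have tt0: "t \<ge> t0" unfolding t_def using sge c by (simp add: field_simps)
  have sq: "sqrt u \<le> t0"
  proof -
    have "ln (sqrt u) \<le> sqrt u - 1" using u by (intro ln_le_minus_one) auto
    moreover have "ln (sqrt u) = ln u / 2" using u by (simp add: ln_sqrt)
    ultimately have "ln u \<le> 2 * sqrt u" by linarith
    then have "sqrt u * ln u \<le> 2 * sqrt u * sqrt u"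
      by (metis mult.commute mult_le_cancel_left_pos real_sqrt_gt_0_iff u zero_less_one order_less_trans mult.assoc)
    also have "\<dots> = 2 * u" using u by simp
    finally show ?thesis unfolding t0_def using lu by (simp add: field_simps)
  qed
  have su: "sqrt u > 0" using u by simp
  have lnt: "ln t \<ge> ln u / 2"
  proof -
    have "ln u / 2 = ln (sqrt u)" using u by (simp add: ln_sqrt)
    also have "\<dots> \<le> ln t" using sq tt0 su by (subst ln_le_cancel_iff) (auto intro: order_less_le_trans[OF su])
    finally show ?thesis .
  qed
  have t0p: "t0 > 0" using sq su by linarith
  have key: "real s * ln t \<ge> l"
  proof -
    have e1: "real s * ln t = c * (t * ln t)" unfolding t_def using c by simp
    have "t * ln t \<ge> t0 * (ln u / 2)"
      using tt0 lnt t0p lu by (intro mult_mono) auto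
    then have e2: "c * (t * ln t) \<ge> c * (t0 * (ln u / 2))" using c by simp
    have e3: "t0 * (ln u / 2) = u" unfolding t0_def using lu by simp
    have e4: "c * (t0 * (ln u / 2)) = l" by (simp only: e3 l_eq)
    show ?thesis using e1 e2 e4 by linarith
  qed
  have sp: "real s > 0" using s1 by simp
  have q: "(c / s)^s = exp (- (real s * ln t))"
  proof -
    have "(c / s)^s = exp (ln ((c/s)^s))" using c sp by simp
    also have "ln ((c/s)^s) = real s * ln (c / s)" using c sp by (simp add: ln_realpow)
    also have "ln (c / s) = - ln t" unfolding t_def using c sp by (simp add: ln_div)
    finally show ?thesis by simp
  qed
  have "(c / s)^s \<le> exp (- l)" unfolding q using key by simp
  also have "exp (- l) = 1 / A" unfolding l_def using A0 by (simp add: exp_minus inverse_eq_divide)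
  finally have qA: "(c / s)^s \<le> 1 / A" .
  have "S2 * B * (c / s)^s \<le> \<xi> * B * (1 / A)"
    using S B qA c by (intro mult_mono) auto
  also have "\<dots> = \<alpha>"
  proof -
    have "\<xi> \<noteq> 0" using A0 unfolding A by auto
    then show ?thesis unfolding A using al B by (simp add: field_simps)
  qed
  finally show ?thesis .
qed

theorem lemma2p6:
  "\<exists>C>0. \<forall>(L::real) (d::nat) (n::nat) (x::nat \<Rightarrow> nat \<Rightarrow> real) (w::nat \<Rightarrow> real) (\<xi>::real) (\<alpha>::real).
     L > 0 \<and> d \<ge> 1 \<and> (\<forall>i<n. \<forall>a<d. \<bar>x i a\<bar> \<le> L) \<and>
     (\<Sum>i<n. \<bar>w i\<bar>)^2 \<le> \<xi> \<and> \<alpha> > 0 \<longrightarrow>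
       (\<forall>s::nat. s \<ge> 1 \<longrightarrow>
          quad_form n w (\<lambda>i j. gauss_kernel d x i j - gs_kernel d s x i j)
            \<le> (\<Sum>i<n. \<bar>w i\<bar>)^2 * d * exp (2 * d * L^2) * (2 * exp 1 * L^2 / s) ^ s) \<and>
       (let A = \<xi> * d * exp (2 * d * L^2) / \<alpha> in
        ln A / (2 * exp 1 * L^2) > 1 \<longrightarrow>
        (\<forall>s::nat. s \<ge> 1 \<and> real s \<ge> C * (ln A / ln (ln A / (2 * exp 1 * L^2))) \<longrightarrow>
           (\<Sum>i<n. \<bar>w i\<bar>)^2 * d * exp (2 * d * L^2) * (2 * exp 1 * L^2 / s) ^ s \<le> \<alpha>))"
proof (rule exI[of _ 2], intro conjI allI impI)
  show "(0::real) < 2" by simp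
next
  fix L :: real and d n :: nat and x :: "nat \<Rightarrow> nat \<Rightarrow> real" and w :: "nat \<Rightarrow> real" and \<xi> \<alpha> :: real and s :: nat
  assume H: "L > 0 \<and> d \<ge> 1 \<and> (\<forall>i<n. \<forall>a<d. \<bar>x i a\<bar> \<le> L) \<and> (\<Sum>i<n. \<bar>w i\<bar>)^2 \<le> \<xi> \<and> \<alpha> > 0"
  assume s: "s \<ge> 1"
  have "\<forall>i<n. \<forall>j<n. \<bar>gauss_kernel d x i j - gs_kernel d s x i j\<bar>
      \<le> real d * exp (2 * d * L^2) * (2 * exp 1 * L^2 / s) ^ s"
  proof (intro allI impI)
    fix i j assume "i < n" "j < n"
    then show "\<bar>gauss_kernel d x i j - gs_kernel d s x i j\<bar>
      \<le> real d * exp (2 * d * L^2) * (2 * exp 1 * L^2 / s) ^ s"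
      using H s entry_bound[of L d x i j s] by auto
  qed
  from quad_bound[OF this, of w]
  show "quad_form n w (\<lambda>i j. gauss_kernel d x i j - gs_kernel d s x i j)
            \<le> (\<Sum>i<n. \<bar>w i\<bar>)^2 * d * exp (2 * d * L^2) * (2 * exp 1 * L^2 / s) ^ s"
    by (simp add: mult.assoc)
next
  fix L :: real and d n :: nat and x :: "nat \<Rightarrow> nat \<Rightarrow> real" and w :: "nat \<Rightarrow> real" and \<xi> \<alpha> :: real
  assume H: "L > 0 \<and> d \<ge> 1 \<and> (\<forall>i<n. \<forall>a<d. \<bar>x i a\<bar> \<le> L) \<and> (\<Sum>i<n. \<bar>w i\<bar>)^2 \<le> \<xi> \<and> \<alpha> > 0"
  show "let A = \<xi> * d * exp (2 * d * L^2) / \<alpha> in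
        ln A / (2 * exp 1 * L^2) > 1 \<longrightarrow>
        (\<forall>s::nat. s \<ge> 1 \<and> real s \<ge> 2 * (ln A / ln (ln A / (2 * exp 1 * L^2))) \<longrightarrow>
           (\<Sum>i<n. \<bar>w i\<bar>)^2 * d * exp (2 * d * L^2) * (2 * exp 1 * L^2 / s) ^ s \<le> \<alpha>)"
    unfolding Let_def
  proof (intro allI impI, elim conjE)
    fix s :: nat
    assume u1: "ln (\<xi> * d * exp (2 * d * L^2) / \<alpha>) / (2 * exp 1 * L^2) > 1"
      and s1: "s \<ge> 1"
      and sC: "real s \<ge> 2 * (ln (\<xi> * d * exp (2 * d * L^2) / \<alpha>) / ln (ln (\<xi> * d * exp (2 * d * L^2) / \<alpha>) / (2 * exp 1 * L^2)))"
    have B: "real d * exp (2 * d * L^2) > 0" using H by simp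
    have c: "2 * exp 1 * L^2 > 0" using H by simp
    have H1: "(\<Sum>i<n. \<bar>w i\<bar>)^2 \<le> \<xi>" "\<alpha> > 0" using H by auto
    have "(\<Sum>i<n. \<bar>w i\<bar>)^2 * (real d * exp (2 * d * L^2)) * (2 * exp 1 * L^2 / s) ^ s \<le> \<alpha>"
      by (rule part2[OF c _ B _ _ _ _ s1]) (use H1 u1 sC in \<open>simp_all add: mult.assoc\<close>)
    then show "(\<Sum>i<n. \<bar>w i\<bar>)^2 * d * exp (2 * d * L^2) * (2 * exp 1 * L^2 / s) ^ s \<le> \<alpha>"
      by (simp add: mult.assoc)
  qed
qed

end
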